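(* Let $\gamma>0$, $y>0$ and $x_1\ge0$ be real numbers with $y+4x_1<1$. Then the function $\sigma\mapsto I_{y,x_1}(\sigma)$ is strictly increasing on its domain $\{\sigma\ge0: y+4x_1+\sigma/\gamma<1\}$.
   Context: $E(x)=-x\log_qx-(1-x)\log_q(1-x)$ for $0<x<1$, $E(0)=E(1)=0$. $S(\sigma,y,x,t_1)=E(t_1)+(1-t_1)E\bigl(\frac{y+x+t_1}{1-t_1}\bigr)+Z$, where $Z=(y+\sigma/\gamma+t_1)E\bigl(\frac{y+x+t_1}{y+\sigma/\gamma+t_1}\bigr)$ if $\frac{y+x+t_1}{y+\sigma/\gamma+t_1}\ge1-\frac1q$ and $Z=(y+\sigma/\gamma+t_1)-(y+x+t_1)\log_q(q-1)$ otherwise. $I_{y,x_1}(\sigma)=\max S(\sigma,y,x,t_1)$ over real $0\le t_1\le2x_1$, $0\le x\le\sigma/\gamma$. *)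

theory Defs
  imports Complex_Main
begin

text \<open>Entropy-type function E with logarithm base q (values outside (0,1) set to 0,
  matching E(0)=E(1)=0; only arguments in [0,1] are ever used).\<close>
definition Ent :: "real \<Rightarrow> real \<Rightarrow> real" where
  "Ent q x = (if 0 < x \<and> x < 1 then - x * log q x - (1 - x) * log q (1 - x) else 0)"

definition Zterm :: "real \<Rightarrow> real \<Rightarrow> real \<Rightarrow> real \<Rightarrow> real \<Rightarrow> real \<Rightarrow> real" where
  "Zterm q \<gamma> \<sigma> y x t1 =
     (if (y + x + t1) / (y + \<sigma> / \<gamma> + t1) \<ge> 1 - 1 / q
      then (y + \<sigma> / \<gamma> + t1) * Ent q ((y + x + t1) / (y + \<sigma> / \<gamma> + t1))
      else (y + \<sigma> / \<gamma> + t1) - (y + x + t1) * log q (q - 1))"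

definition Sfun :: "real \<Rightarrow> real \<Rightarrow> real \<Rightarrow> real \<Rightarrow> real \<Rightarrow> real \<Rightarrow> real" where
  "Sfun q \<gamma> \<sigma> y x t1 =
     Ent q t1 + (1 - t1) * Ent q ((y + x + t1) / (1 - t1)) + Zterm q \<gamma> \<sigma> y x t1"

text \<open>I_{y,x1}(sigma): the maximum of S over 0 <= t1 <= 2 x1, 0 <= x <= sigma/gamma
  (taken as the supremum over this compact parameter set).\<close>
definition Ifun :: "real \<Rightarrow> real \<Rightarrow> real \<Rightarrow> real \<Rightarrow> real \<Rightarrow> real" where
  "Ifun q \<gamma> y x1 \<sigma> =
     Sup {Sfun q \<gamma> \<sigma> y x t1 | x t1. 0 \<le> t1 \<and> t1 \<le> 2 * x1 \<and> 0 \<le> x \<and> x \<le> \<sigma> / \<gamma>}"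

end

theory Submission
  imports Defs
begin

lemma Ent_le:
  assumes q: "1 < q" shows "Ent q z \<le> 1 / ln q"
proof -
  have L: "ln q > 0" using q by simp
  show ?thesis
  proof (cases "0 < z \<and> z < 1")
    case True
    have h1: "- z * ln z \<le> 1 - z"
    proof -
      have "ln (1/z) \<le> 1/z - 1" using True by (intro ln_le_minus_one) simp
      hence "- ln z \<le> 1/z - 1" using True by (simp add: ln_div)
      hence "z * (- ln z) \<le> z * (1/z - 1)" using True by (intro mult_left_mono) auto
      moreover have "z * (1/z - 1) = 1 - z" using True by (simp add: field_simps)
      ultimately show ?thesis by simp
    qed
    have h2: "- (1-z) * ln (1-z) \<le> z"
    proof -
      have "ln (1/(1-z)) \<le> 1/(1-z) - 1" using True by (intro ln_le_minus_one) simp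
      hence "- ln (1-z) \<le> 1/(1-z) - 1" using True by (simp add: ln_div)
      hence "(1-z) * (- ln (1-z)) \<le> (1-z) * (1/(1-z) - 1)" using True by (intro mult_left_mono) auto
      moreover have "(1-z) * (1/(1-z) - 1) = z" using True by (simp add: field_simps)
      moreover have "- (1-z) * ln (1-z) = (1-z) * (- ln (1-z))" by (simp add: algebra_simps)
      ultimately show ?thesis by linarith
    qed
    have s1: "- z * ln z - (1-z) * ln (1-z) \<le> 1" using h1 h2 by linarith
    have "Ent q z = (- z * ln z - (1-z) * ln (1-z)) / ln q"
      using True by (simp add: Ent_def log_def diff_divide_distrib)
    also have "\<dots> \<le> 1 / ln q" using s1 L by (intro divide_right_mono) auto
    finally show ?thesis .
  next
    case False then have "Ent q z = 0" unfolding Ent_def by auto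
    then show ?thesis using L by simp
  qed
qed

definition Zb :: "real \<Rightarrow> real \<Rightarrow> real \<Rightarrow> real" where
  "Zb q a b = (if a / b \<ge> 1 - 1/q then b * Ent q (a/b) else b - a * log q (q-1))"

lemma Zb_formula:
  assumes q: "1 < q" and a: "0 < a" "a < b"
  shows "b * Ent q (a/b) = (b*ln b - (b-a)*ln(b-a) - a*ln a)/ln q"
proof -
  have e1: "ln (a/b) = ln a - ln b" using a by (simp add: ln_div)
  have e2: "1 - a/b = (b-a)/b" using a by (simp add: field_simps)
  have e3: "ln ((b-a)/b) = ln (b-a) - ln b" using a by (simp add: ln_div)
  have p: "0 < a/b" "a/b < 1" using a by auto
  have "b * Ent q (a/b) = b * ((- (a/b) * ln (a/b) - (1 - a/b) * ln (1 - a/b)) / ln q)"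
    using p by (simp add: Ent_def log_def diff_divide_distrib)
  also have "\<dots> = b * ((- (a/b) * (ln a - ln b) - ((b-a)/b) * (ln (b-a) - ln b)) / ln q)"
    by (simp only: e1 e2 e3)
  also have "\<dots> = (b * (- (a/b) * (ln a - ln b) - ((b-a)/b) * (ln (b-a) - ln b))) / ln q"
    by simp
  also have "b * (- (a/b) * (ln a - ln b) - ((b-a)/b) * (ln (b-a) - ln b)) = b*ln b - (b-a)*ln(b-a) - a*ln a"
    using a by (simp add: field_simps)
  finally show ?thesis .
qed

lemma F3:
  assumes q: "2 \<le> q" and a: "0 < a" "a < u" "u \<le> v" "v \<le> a*q/(q-1)"
  shows "u * Ent q (a/u) - u \<le> v * Ent q (a/v) - v"
proof -
  define h where "h = (\<lambda>w. (w*ln w - (w-a)*ln(w-a) - a*ln a)/ln q - w)"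
  have L: "ln q > 0" using q by simp
  have "h u \<le> h v"
  proof (rule DERIV_nonneg_imp_nondecreasing[OF a(3)])
    fix w assume w: "u \<le> w" "w \<le> v"
    have wa: "w - a > 0" "w > 0" using w a by auto
    have D: "(h has_real_derivative (((ln w + 1) - (ln (w-a) + 1))/ln q - 1)) (at w)"
      unfolding h_def using wa L
      by (auto intro!: derivative_eq_intros)
    have "(q-1) * w \<le> (q-1) * v" using w q by (intro mult_left_mono) auto
    moreover have "v * (q - 1) \<le> a * q" using a q by (simp add: field_simps)
    ultimately have "w * (q - 1) \<le> a * q" by (simp add: algebra_simps)
    hence "q * (w - a) \<le> w" by (simp add: algebra_simps)
    hence "q \<le> w / (w-a)" using wa by (simp add: field_simps)
    hence "ln q \<le> ln (w/(w-a))" using q by simp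
    hence "ln q \<le> ln w - ln (w-a)" using wa by (simp add: ln_div)
    hence "0 \<le> ((ln w + 1) - (ln (w-a) + 1))/ln q - 1" using L by (simp add: field_simps)
    with D show "\<exists>y. (h has_real_derivative y) (at w) \<and> 0 \<le> y" by blast
  qed
  thus ?thesis using Zb_formula[of q a u] Zb_formula[of q a v] a q unfolding h_def by simp
qed

lemma F4:
  assumes q: "2 \<le> q" and a: "0 < a" "a < u" "u \<le> a*q/(q-1)"
  shows "- a \<le> u * Ent q (a/u) - u"
proof -
  have L: "ln q > 0" using q by simp
  have ua: "u - a > 0" using a by auto
  have "u * (q - 1) \<le> a * q" using a q by (simp add: field_simps)
  hence "q * (u - a) \<le> u" by (simp add: algebra_simps)
  hence "q \<le> u / (u-a)" using ua by (simp add: field_simps)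
  hence "ln q \<le> ln (u/(u-a))" using q by simp
  hence i1: "ln q \<le> ln u - ln (u-a)" using ua a by (simp add: ln_div)
  have "ln a \<le> ln u" using a by simp
  hence i2: "a * ln a \<le> a * ln u" using a by (intro mult_left_mono) auto
  have "(u-a) * ln q \<le> (u-a) * (ln u - ln (u-a))" using i1 ua by (intro mult_left_mono) auto
  hence "(u - a) * ln q \<le> u*ln u - (u-a)*ln(u-a) - a*ln a" using i2 by (simp add: algebra_simps)
  hence "u - a \<le> (u*ln u - (u-a)*ln(u-a) - a*ln a) / ln q" using L by (simp add: field_simps)
  thus ?thesis using Zb_formula[of q a u] a q by simp
qed

lemma Zb_main:
  assumes q: "2 \<le> q" and a: "0 < a" "a \<le> b" "b \<le> b'"
  shows "Zb q a b - b \<le> Zb q a b' - b'"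
proof -
  define c where "c = a*q/(q-1)"
  have L: "ln q > 0" using q by simp
  have ca: "a < c" using a q by (simp add: c_def field_simps)
  have cond: "(a/w \<ge> 1 - 1/q) \<longleftrightarrow> w \<le> c" if "w > 0" for w
  proof -
    have "(a/w \<ge> 1 - 1/q) \<longleftrightarrow> (q-1) * w \<le> a * q" using that q by (simp add: field_simps)
    also have "\<dots> \<longleftrightarrow> w \<le> c" using q by (simp add: c_def field_simps)
    finally show ?thesis .
  qed
  have K: "Zb q a w - w = - a * log q (q-1)" if "w > c" for w
  proof -
    have "0 < w" using that ca a by linarith
    thus ?thesis using cond[of w] that by (simp add: Zb_def)
  qed
  have Kc: "Zb q a c - c = - a * log q (q-1)"
  proof -
    have ac: "a/c = 1 - 1/q" using a q by (simp add: c_def field_simps)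
    have l1: "log q (1 - 1/q) = log q (q-1) - 1"
    proof -
      have "1 - 1/q = (q-1)/q" using q by (simp add: field_simps)
      thus ?thesis using q by (simp add: log_divide)
    qed
    have l2: "log q (1/q) = -1" using q by (simp add: log_divide)
    have E: "Ent q (1 - 1/q) = 1 - (1 - 1/q) * log q (q-1)"
    proof -
      have "0 < 1 - 1/q" "1 - 1/q < 1" using q by (auto simp: field_simps)
      hence "Ent q (1 - 1/q) = - (1-1/q) * log q (1-1/q) - (1/q) * log q (1/q)"
        by (simp add: Ent_def)
      also have "\<dots> = 1 - (1 - 1/q) * log q (q-1)" unfolding l1 l2 using q by (simp add: field_simps)
      finally show ?thesis .
    qed
    have "Zb q a c = c * Ent q (1 - 1/q)" using cond[of c] ca a ac by (simp add: Zb_def)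
    also have "\<dots> = c - c * (1 - 1/q) * log q (q-1)" unfolding E by (simp add: algebra_simps)
    also have "c * (1 - 1/q) = a" using q by (simp add: c_def field_simps)
    finally show ?thesis by simp
  qed
  have Fa: "Zb q a a - a = - a" using a q by (simp add: Zb_def Ent_def)
  have F3': "Zb q a u - u \<le> Zb q a v - v" if "a < u" "u \<le> v" "v \<le> c" for u v
  proof -
    have "Zb q a u = u * Ent q (a/u)" using cond[of u] that a by (simp add: Zb_def)
    moreover have "Zb q a v = v * Ent q (a/v)" using cond[of v] that a by (simp add: Zb_def)
    ultimately show ?thesis using F3[OF q a(1) that[unfolded c_def]] by simp
  qed
  have F4': "- a \<le> Zb q a u - u" if "a < u" "u \<le> c" for u
  proof -
    have "Zb q a u = u * Ent q (a/u)" using cond[of u] that a by (simp add: Zb_def)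
    thus ?thesis using F4[OF q a(1) that[unfolded c_def]] by simp
  qed
  show ?thesis
  proof (cases "b = a")
    case True
    show ?thesis
    proof (cases "b' = a")
      case True then show ?thesis using \<open>b = a\<close> by simp
    next
      case False
      hence "a < b'" using a by auto
      show ?thesis
      proof (cases "b' \<le> c")
        case True then show ?thesis using F4'[OF \<open>a < b'\<close>] Fa \<open>b = a\<close> by simp
      next
        case False then show ?thesis using K[of b'] Kc F4'[OF ca] Fa \<open>b = a\<close> by simp
      qed
    qed
  next
    case False
    hence ab: "a < b" using a by auto
    show ?thesis
    proof (cases "b' \<le> c")
      case True then show ?thesis using F3'[OF ab a(3)] by simp
    next
      case False
      show ?thesis
      proof (cases "b \<le> c")
        case True then show ?thesis using K[of b'] Kc F3'[OF ab True] False by simp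
      next
        case False2: False
        then show ?thesis using K[of b'] K[of b] False by simp
      qed
    qed
  qed
qed

theorem lemma4p7:
  fixes q :: nat and \<gamma> y x1 :: real
  assumes "q \<ge> 2" and "\<gamma> > 0" and "y > 0" and "x1 \<ge> 0" and "y + 4 * x1 < 1"
  shows "strict_mono_on {\<sigma>. \<sigma> \<ge> 0 \<and> y + 4 * x1 + \<sigma> / \<gamma> < 1} (Ifun (real q) \<gamma> y x1)"
proof (rule strict_mono_onI)
  fix r s assume r: "r \<in> {\<sigma>. \<sigma> \<ge> 0 \<and> y + 4 * x1 + \<sigma> / \<gamma> < 1}"
    and s: "s \<in> {\<sigma>. \<sigma> \<ge> 0 \<and> y + 4 * x1 + \<sigma> / \<gamma> < 1}" and rs: "r < s"
  define Q where "Q = real q"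
  have Q: "2 \<le> Q" using assms(1) by (simp add: Q_def)
  have L: "ln Q > 0" using Q by simp
  define A where "A = (\<lambda>\<sigma>. {Sfun Q \<gamma> \<sigma> y x t1 | x t1. 0 \<le> t1 \<and> t1 \<le> 2 * x1 \<and> 0 \<le> x \<and> x \<le> \<sigma> / \<gamma>})"
  have If: "Ifun (real q) \<gamma> y x1 \<sigma> = Sup (A \<sigma>)" for \<sigma> by (simp add: Ifun_def A_def Q_def)
  define d where "d = (s - r) / \<gamma>"
  have d: "d > 0" using rs assms(2) by (simp add: d_def)
  have rsg: "r/\<gamma> \<le> s/\<gamma>" using rs assms(2) by (simp add: divide_right_mono)
  have Zeq: "Zterm Q \<gamma> \<sigma> y x t1 = Zb Q (y+x+t1) (y + \<sigma>/\<gamma> + t1)" for \<sigma> x t1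
    by (simp add: Zterm_def Zb_def)
  have step: "Sfun Q \<gamma> r y x t1 + d \<le> Sfun Q \<gamma> s y x t1"
    if "0 \<le> t1" "0 \<le> x" "x \<le> r/\<gamma>" for x t1
  proof -
    have "Zb Q (y+x+t1) (y + r/\<gamma> + t1) - (y + r/\<gamma> + t1) \<le> Zb Q (y+x+t1) (y + s/\<gamma> + t1) - (y + s/\<gamma> + t1)"
      using that assms(3) rsg by (intro Zb_main[OF Q]) auto
    thus ?thesis unfolding Sfun_def Zeq d_def using assms(2) by (simp add: diff_divide_distrib)
  qed
  define C where "C = 1 / ln Q"
  have C: "C > 0" using L by (simp add: C_def)
  have EC: "Ent Q z \<le> C" for z using Ent_le[of Q z] Q by (simp add: C_def)
  have bdd: "bdd_above (A s)"
  proof (rule bdd_aboveI)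
    fix z assume "z \<in> A s"
    then obtain x t1 where z: "z = Sfun Q \<gamma> s y x t1" and h: "0 \<le> t1" "t1 \<le> 2 * x1" "0 \<le> x" "x \<le> s / \<gamma>"
      unfolding A_def by blast
    have s0: "s/\<gamma> \<ge> 0" using s assms(2) by simp
    have t1: "t1 < 1" "1 - t1 \<le> 1" using h assms s by auto
    have b: "0 < y + s/\<gamma> + t1" "y + s/\<gamma> + t1 \<le> 1" using h assms s s0 by auto
    have T2: "(1 - t1) * Ent Q ((y + x + t1) / (1 - t1)) \<le> C"
    proof -
      have "(1 - t1) * Ent Q ((y + x + t1) / (1 - t1)) \<le> (1 - t1) * C"
        using t1 EC by (intro mult_left_mono) auto
      also have "\<dots> \<le> C" using t1 C h by (simp add: mult_left_le_one_le)
      finally show ?thesis .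
    qed
    have T3: "Zterm Q \<gamma> s y x t1 \<le> C + 1"
    proof -
      have "(y + s/\<gamma> + t1) * Ent Q ((y + x + t1) / (y + s/\<gamma> + t1)) \<le> (y + s/\<gamma> + t1) * C"
        using b EC by (intro mult_left_mono) auto
      also have "\<dots> \<le> C" using b C by (simp add: mult_left_le_one_le)
      finally have 1: "(y + s/\<gamma> + t1) * Ent Q ((y + x + t1) / (y + s/\<gamma> + t1)) \<le> C + 1" by simp
      have "log Q (Q - 1) \<ge> 0" using Q by simp
      hence "(y + x + t1) * log Q (Q - 1) \<ge> 0" using h assms(3) by simp
      hence 2: "(y + s/\<gamma> + t1) - (y + x + t1) * log Q (Q - 1) \<le> C + 1" using b C by linarith
      show ?thesis using 1 2 by (simp add: Zterm_def)
    qed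
    show "z \<le> 3 * C + 1" using z EC[of t1] T2 T3 by (simp add: Sfun_def)
  qed
  have ne: "A r \<noteq> {}"
  proof -
    have "r / \<gamma> \<ge> 0" using r assms(2) by simp
    hence "Sfun Q \<gamma> r y 0 0 \<in> A r" unfolding A_def using assms(4) by force
    thus ?thesis by blast
  qed
  have "Sup (A r) \<le> Sup (A s) - d"
  proof (rule cSup_least[OF ne])
    fix z assume "z \<in> A r"
    then obtain x t1 where z: "z = Sfun Q \<gamma> r y x t1" and h: "0 \<le> t1" "t1 \<le> 2 * x1" "0 \<le> x" "x \<le> r / \<gamma>"
      unfolding A_def by blast
    have "Sfun Q \<gamma> s y x t1 \<in> A s" unfolding A_def using h rsg by force
    hence "Sfun Q \<gamma> s y x t1 \<le> Sup (A s)" using bdd by (rule cSup_upper)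
    thus "z \<le> Sup (A s) - d" using step[OF h(1,3,4)] z by simp
  qed
  thus "Ifun (real q) \<gamma> y x1 r < Ifun (real q) \<gamma> y x1 s" using d by (simp add: If)
qed

end
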